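(* Let $z,z'\in\mathbb C\setminus\mathbb Z$ with $t=zz'\notin\{0,-1,-2,\dots\}$, and let $M_{zz'}$ be defined by $$M_{zz'}(\lambda)=\frac{\prod_{(i,j)\in\lambda}(z+j-i)(z'+j-i)}{(t)_{|\lambda|}}\cdot\frac{(\dim\lambda)^2}{|\lambda|!},\qquad M_{zz'}(\varnothing)=1 .$$ Then $M_{zz'}(\lambda)\neq0$ for every Young diagram $\lambda$. Moreover, $M_{zz'}(\lambda)>0$ for all Young diagrams $\lambda$ if and only if one of the following holds: (i) $z'=\bar z$ (and $z\notin\mathbb Z$); (ii) $z,z'$ are real and both lie in one open interval $(m,m+1)$ with $m\in\mathbb Z$.
   Context: Young diagrams are identified with partitions; $|\lambda|$ is the number of boxes and $(i,j)\in\lambda$ denotes the box in row $i$, column $j$. $\dim\lambda$ is the number of standard Young tableaux of shape $\lambda$. $(t)_n=t(t+1)\cdots(t+n-1)$. *)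

theory Defs
  imports Complex_Main
begin

text \<open>Young diagrams = integer partitions, represented as weakly decreasing
lists of positive row lengths.\<close>
definition young_diagram :: "nat list \<Rightarrow> bool" where
  "young_diagram la \<longleftrightarrow> sorted_wrt (\<ge>) la \<and> 0 \<notin> set la"

text \<open>Boxes (i,j): row i, column j, 1-indexed.\<close>
definition boxes :: "nat list \<Rightarrow> (nat \<times> nat) set" where
  "boxes la = {(i, j). 1 \<le> i \<and> i \<le> length la \<and> 1 \<le> j \<and> j \<le> la ! (i - 1)}"

definition size_yd :: "nat list \<Rightarrow> nat" where
  "size_yd la = sum_list la"

definition SYT :: "nat list \<Rightarrow> ((nat \<times> nat) \<Rightarrow> nat) set" where
  "SYT la = {T. bij_betw T (boxes la) {1..size_yd la}
     \<and> (\<forall>i j. (i, j) \<in> boxes la \<and> (i, Suc j) \<in> boxes la \<longrightarrow> T (i, j) < T (i, Suc j))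
     \<and> (\<forall>i j. (i, j) \<in> boxes la \<and> (Suc i, j) \<in> boxes la \<longrightarrow> T (i, j) < T (Suc i, j))
     \<and> (\<forall>x. x \<notin> boxes la \<longrightarrow> T x = 0)}"

definition dim_yd :: "nat list \<Rightarrow> nat" where
  "dim_yd la = card (SYT la)"

definition M_zz :: "complex \<Rightarrow> complex \<Rightarrow> nat list \<Rightarrow> complex" where
  "M_zz z z' la =
     (\<Prod>(i, j)\<in>boxes la. (z + of_int (int j - int i)) * (z' + of_int (int j - int i)))
       / pochhammer (z * z') (size_yd la)
     * (of_nat (dim_yd la))^2 / of_nat (fact (size_yd la))"

end

theory Submission
  imports Defs
begin


lemma boxes_cons:
  "(i, j) \<in> boxes (r # la) \<longleftrightarrow> (i = 1 \<and> 1 \<le> j \<and> j \<le> r) \<or> (i \<ge> 2 \<and> (i - 1, j) \<in> boxes la)"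
  unfolding boxes_def by (cases i; auto simp: nth_Cons split: nat.splits)

lemma boxes_finite: "finite (boxes la)"
proof -
  have "boxes la \<subseteq> {..length la} \<times> {..sum_list la}"
  proof
    fix x assume "x \<in> boxes la"
    then obtain i j where x: "x = (i, j)" "1 \<le> i" "i \<le> length la" "j \<le> la ! (i - 1)"
      unfolding boxes_def by auto
    then have "la ! (i - 1) \<le> sum_list la" by (intro elem_le_sum_list) auto
    then show "x \<in> {..length la} \<times> {..sum_list la}" using x by auto
  qed
  then show ?thesis by (rule finite_subset) auto
qed

lemma SYT_finite: "finite (SYT la)"
proof -
  have "SYT la \<subseteq> {f. \<forall>x. (x \<in> boxes la \<longrightarrow> f x \<in> {1..size_yd la}) \<and> (x \<notin> boxes la \<longrightarrow> f x = 0)}"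
    unfolding SYT_def bij_betw_def by auto
  then show ?thesis
    by (rule finite_subset) (intro finite_set_of_finite_funs boxes_finite finite_atLeastAtMost)
qed

lemma boxes_Nil: "boxes [] = {}" unfolding boxes_def by auto

lemma SYT_nonempty: "SYT la \<noteq> {}"
proof (induction la)
  case Nil
  have "(\<lambda>_. 0) \<in> SYT []" unfolding SYT_def boxes_Nil size_yd_def by (auto simp: bij_betw_def)
  then show ?case by auto
next
  case (Cons r la)
  then obtain T where T: "T \<in> SYT la" by auto
  define S where "S = size_yd la"
  have Tb: "bij_betw T (boxes la) {1..S}" and Tr: "\<And>i j. (i, j) \<in> boxes la \<Longrightarrow> (i, Suc j) \<in> boxes la \<Longrightarrow> T (i, j) < T (i, Suc j)"
    and Tc: "\<And>i j. (i, j) \<in> boxes la \<Longrightarrow> (Suc i, j) \<in> boxes la \<Longrightarrow> T (i, j) < T (Suc i, j)"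
    using T unfolding SYT_def S_def by auto
  define A where "A = (\<lambda>j. (1::nat, j)) ` {1..r}"
  define B where "B = (\<lambda>(i, j). (Suc i, j)) ` boxes la"
  have bx: "boxes (r # la) = A \<union> B"
  proof (rule set_eqI)
    fix x :: "nat \<times> nat"
    obtain i j where x: "x = (i, j)" by (cases x)
    show "x \<in> boxes (r # la) \<longleftrightarrow> x \<in> A \<union> B"
    proof
      assume "x \<in> boxes (r # la)"
      then have "(i = 1 \<and> 1 \<le> j \<and> j \<le> r) \<or> (i \<ge> 2 \<and> (i - 1, j) \<in> boxes la)" using x boxes_cons by auto
      then show "x \<in> A \<union> B"
      proof
        assume "i = 1 \<and> 1 \<le> j \<and> j \<le> r" then show ?thesis unfolding A_def x by auto
      next
        assume h: "i \<ge> 2 \<and> (i - 1, j) \<in> boxes la"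
        then have "x = (\<lambda>(i, j). (Suc i, j)) (i - 1, j)" using x by auto
        then show ?thesis unfolding B_def using h by blast
      qed
    next
      assume "x \<in> A \<union> B"
      then show "x \<in> boxes (r # la)"
        unfolding A_def B_def x using boxes_cons by (auto simp: boxes_def)
    qed
  qed
  define T' where "T' = (\<lambda>(i, j). if (i, j) \<in> boxes (r # la) then (if i = 1 then j else r + T (i - 1, j)) else 0)"
  have T'A: "T' (1, j) = j" if "1 \<le> j" "j \<le> r" for j using that unfolding T'_def by (auto simp: boxes_cons)
  have T'B: "T' (Suc i, j) = r + T (i, j)" if "(i, j) \<in> boxes la" for i j
    using that unfolding T'_def by (auto simp: boxes_cons boxes_def)
  have T0: "(i, j) \<in> boxes la \<Longrightarrow> i \<ge> 1" for i j by (auto simp: boxes_def)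
  have b1: "bij_betw T' A {1..r}"
    unfolding A_def bij_betw_def inj_on_def using T'A by (auto simp: image_iff)
  have b2: "bij_betw T' B ((\<lambda>x. r + x) ` {1..S})"
  proof -
    have "bij_betw ((\<lambda>x. r + x) \<circ> T \<circ> (\<lambda>(i, j). (i - 1, j))) B ((\<lambda>x. r + x) ` {1..S})"
    proof (rule bij_betw_trans[OF _ bij_betw_trans[OF _ bij_betw_imageI]])
      show "bij_betw (\<lambda>(i, j). (i - 1, j)) B (boxes la)"
        unfolding B_def bij_betw_def inj_on_def
      proof (intro conjI ballI impI)
        show "(\<lambda>(i, j). (i - 1, j)) ` (\<lambda>(i, j). (Suc i, j)) ` boxes la = boxes la"
          by (auto simp: image_image case_prod_beta)
      qed auto
      show "bij_betw T (boxes la) {1..S}" by (rule Tb)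
      show "inj_on ((+) r) {1..S}" by auto
    qed (auto simp: comp_def)
    then show ?thesis
      by (rule bij_betw_cong[THEN iffD1, rotated]) (auto simp: B_def T'B)
  qed
  have im: "(\<lambda>x. r + x) ` {1..S} = {r+1..r+S}" by (auto simp: image_iff intro!: bexI[of _ "_ - r"])
  have "bij_betw T' (A \<union> B) ({1..r} \<union> {r+1..r+S})"
    by (rule bij_betw_combine[OF b1 b2[unfolded im]]) auto
  moreover have "{1..r} \<union> {r+1..r+S} = {1..size_yd (r # la)}"
    by (auto simp: S_def size_yd_def)
  ultimately have bij: "bij_betw T' (boxes (r # la)) {1..size_yd (r # la)}" using bx by simp
  have Tpos: "T (i, j) \<ge> 1" if "(i, j) \<in> boxes la" for i j
    using Tb that unfolding bij_betw_def by auto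
  have "T' \<in> SYT (r # la)"
    unfolding SYT_def
  proof (intro CollectI conjI allI impI)
    show "bij_betw T' (boxes (r # la)) {1..size_yd (r # la)}" by (rule bij)
  next
    fix i j assume h: "(i, j) \<in> boxes (r # la) \<and> (i, Suc j) \<in> boxes (r # la)"
    show "T' (i, j) < T' (i, Suc j)"
    proof (cases "i = 1")
      case True
      then have "1 \<le> j" "Suc j \<le> r" using h by (simp_all add: boxes_cons)
      then show ?thesis using True T'A[of j] T'A[of "Suc j"] by simp
    next
      case False
      then have "i \<ge> 2" "(i - 1, j) \<in> boxes la" "(i - 1, Suc j) \<in> boxes la"
        using h by (simp_all add: boxes_cons)
      moreover have "i = Suc (i - 1)" using \<open>i \<ge> 2\<close> by simp
      ultimately show ?thesis using T'B[of "i - 1" j] T'B[of "i - 1" "Suc j"] Tr[of "i - 1" j] by simp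
    qed
  next
    fix i j assume h: "(i, j) \<in> boxes (r # la) \<and> (Suc i, j) \<in> boxes (r # la)"
    show "T' (i, j) < T' (Suc i, j)"
    proof (cases "i = 1")
      case True
      then have "1 \<le> j" "j \<le> r" "(1, j) \<in> boxes la" using h by (simp_all add: boxes_cons)
      then show ?thesis using True T'A[of j] T'B[of 1 j] Tpos[of 1 j] by simp
    next
      case False
      then have "i \<ge> 2" "(i - 1, j) \<in> boxes la" "(Suc (i - 1), j) \<in> boxes la"
        using h by (simp_all add: boxes_cons, auto simp: boxes_cons)
      moreover have "i = Suc (i - 1)" using \<open>i \<ge> 2\<close> by simp
      ultimately show ?thesis using T'B[of "i - 1" j] T'B[of "Suc (i - 1)" j] Tc[of "i - 1" j] by simp
    qed
  next
    fix x assume "x \<notin> boxes (r # la)" then show "T' x = 0" unfolding T'_def by (cases x) simp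
  qed
  then show ?case by auto
qed

lemma dim_pos: "dim_yd la > 0"
  unfolding dim_yd_def using SYT_finite SYT_nonempty by (simp add: card_gt_0_iff)




definition posr :: "complex \<Rightarrow> bool" where "posr c \<longleftrightarrow> c \<in> \<real> \<and> Re c > 0"

lemma posr_iff: "posr c \<longleftrightarrow> (\<exists>r>0. c = complex_of_real r)"
  unfolding posr_def by (auto elim!: Reals_cases)

lemma posr_of_real[simp]: "posr (complex_of_real r) \<longleftrightarrow> r > 0"
  unfolding posr_def by auto

lemma posr_mult: "posr a \<Longrightarrow> posr b \<Longrightarrow> posr (a * b)"
  unfolding posr_iff by (auto simp del: of_real_mult simp: of_real_mult[symmetric])

lemma posr_divide: "posr a \<Longrightarrow> posr b \<Longrightarrow> posr (a / b)"
  unfolding posr_iff by (auto simp del: of_real_divide simp: of_real_divide[symmetric])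

lemma posr_cancel: "posr a \<Longrightarrow> posr (a * b) \<Longrightarrow> posr b"
proof -
  assume a: "posr a" and ab: "posr (a * b)"
  have "a \<noteq> 0" using a unfolding posr_def by auto
  then have "b = (a * b) / a" by simp
  then show "posr b" using posr_divide[OF ab a] by simp
qed

lemma posr_scale: "r > 0 \<Longrightarrow> posr (c * complex_of_real r) \<longleftrightarrow> posr c"
  using posr_cancel[of "complex_of_real r" c] posr_mult[of c "complex_of_real r"]
  by (auto simp: mult.commute)

lemma posr_prod: "(\<And>x. x \<in> A \<Longrightarrow> posr (f x)) \<Longrightarrow> posr (prod f A)"
proof (induction A rule: infinite_finite_induct)
  case (infinite A) then show ?case by (simp add: posr_def)
next
  case empty then show ?case by (simp add: posr_def)
next
  case (insert x F) then show ?case by (simp add: posr_mult)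
qed

lemma t_real:
  fixes z z' :: complex
  assumes "posr ((z + 2) * (z' + 2) / (z * z' + 2))" "posr ((z - 2) * (z' - 2) / (z * z' + 2))"
    and "z * z' + 2 \<noteq> 0"
  shows "z * z' \<in> \<real>"
proof -
  define t where "t = z * z'"
  have "(z + 2) * (z' + 2) / (t + 2) + (z - 2) * (z' - 2) / (t + 2) \<in> \<real>"
    using assms unfolding posr_def t_def by auto
  moreover have "(z + 2) * (z' + 2) / (t + 2) + (z - 2) * (z' - 2) / (t + 2) = 2 + 4 / (t + 2)"
  proof -
    have "(z + 2) * (z' + 2) + (z - 2) * (z' - 2) = 2 * (t + 2) + 4" unfolding t_def by algebra
    then have "(z + 2) * (z' + 2) / (t + 2) + (z - 2) * (z' - 2) / (t + 2) = (2 * (t + 2) + 4) / (t + 2)"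
      by (simp add: add_divide_distrib[symmetric])
    also have "\<dots> = 2 + 4 / (t + 2)" using assms(3) unfolding t_def[symmetric] by (simp add: field_simps)
    finally show ?thesis .
  qed
  ultimately have "2 + 4 / (t + 2) \<in> \<real>" by simp
  then have r4: "4 / (t + 2) \<in> \<real>" using Reals_diff[of "2 + 4 / (t + 2)" 2] by simp
  have e: "t + 2 = 4 / (4 / (t + 2))" using assms(3) unfolding t_def by simp
  have "4 / (4 / (t + 2)) \<in> \<real>" by (rule Reals_divide) (simp_all only: r4 Reals_numeral)
  then have "t + 2 \<in> \<real>" by (simp only: e[symmetric])
  then have "(t + 2) - 2 \<in> \<real>" by (rule Reals_diff) simp
  then show ?thesis unfolding t_def by simp
qed

lemma s_real:
  fixes z z' :: complex
  assumes "posr ((z + 1) * (z' + 1) / (z * z' + 1))" "z * z' \<in> \<real>" "z * z' + 1 \<noteq> 0"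
  shows "z + z' \<in> \<real>"
proof -
  have "(z + 1) * (z' + 1) / (z * z' + 1) * (z * z' + 1) \<in> \<real>"
  proof (rule Reals_mult)
    show "(z + 1) * (z' + 1) / (z * z' + 1) \<in> \<real>" using assms(1) unfolding posr_def by auto
    show "z * z' + 1 \<in> \<real>" using assms(2) by (intro Reals_add) auto
  qed
  moreover have "(z + 1) * (z' + 1) / (z * z' + 1) * (z * z' + 1) = z * z' + (z + z') + 1"
  proof -
    have "(z + 1) * (z' + 1) / (z * z' + 1) * (z * z' + 1) = (z + 1) * (z' + 1)"
      using assms(3) by simp
    also have "\<dots> = z * z' + (z + z') + 1" by algebra
    finally show ?thesis .
  qed
  ultimately have "z * z' + (z + z') + 1 \<in> \<real>" by simp
  then have "z * z' + (z + z') + 1 - (z * z' + 1) \<in> \<real>" using assms(2) by (intro Reals_diff) auto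
  then show ?thesis by (simp add: algebra_simps)
qed

lemma real_or_conj:
  fixes z z' :: complex
  assumes "z + z' \<in> \<real>" "z * z' \<in> \<real>"
  shows "(z \<in> \<real> \<and> z' \<in> \<real>) \<or> z' = cnj z"
proof -
  have 1: "Im z' = - Im z" using assms(1) by (simp add: complex_is_Real_iff)
  have "Re z * Im z' + Im z * Re z' = 0" using assms(2) by (simp add: complex_is_Real_iff)
  then have "Im z * (Re z' - Re z) = 0" using 1 by (simp add: algebra_simps)
  then show ?thesis using 1 by (auto simp: complex_is_Real_iff complex_eq_iff)
qed

lemma real_contra:
  fixes x y t :: real and c :: int
  assumes "x < c" "c < y" "t = x * y" "t \<noteq> 0"
    and A: "\<And>n::nat. (x + n) * (y + n) / (t + n) > 0"
    and B: "\<And>n::nat. (x - n) * (y - n) / (t + n) > 0"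
    and C: "t / (t + 3) > 0"
  shows False
proof (cases "t > 0")
  case True
  show False
  proof (cases "c \<ge> 0")
    case True
    have "(x - nat c) * (y - nat c) < 0" using assms True by (simp add: mult_neg_pos)
    moreover have "t + nat c > 0" using \<open>t > 0\<close> by simp
    ultimately show False using B[of "nat c"] divide_neg_pos by fastforce
  next
    case False
    have "(x + nat (-c)) * (y + nat (-c)) < 0" using assms False by (simp add: mult_neg_pos)
    moreover have "t + nat (-c) > 0" using \<open>t > 0\<close> by simp
    ultimately show False using A[of "nat (-c)"] divide_neg_pos by fastforce
  qed
next
  case False
  then have tn: "t < 0" using assms(4) by simp
  have xy: "x < 0" "y > 0"
  proof -
    show "x < 0"
    proof (rule ccontr)
      assume "\<not> x < 0" then have "x * y \<ge> 0" using assms(1,2) by simp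
      then show False using tn assms(3) by simp
    qed
    then show "y > 0" using tn assms(3) by (metis mult_neg_neg not_less_iff_gr_or_eq mult_zero_right)
  qed
  have t3: "t + 3 < 0" using C tn by (simp add: zero_less_divide_iff)
  have all: "t + real n < 0" for n
  proof (induction n)
    case 0 then show ?case using tn by simp
  next
    case (Suc n)
    show ?case
    proof (cases "n < 3")
      case True then have "real (Suc n) \<le> 3" by simp
      then show ?thesis using t3 by simp
    next
      case False
      have "(x + n) * (y + n) < 0" using A[of n] Suc.IH by (simp add: zero_less_divide_iff)
      then have xn: "x + n < 0" using xy by (simp add: mult_less_0_iff)
      have "(x - n) * (y - n) < 0" using B[of n] Suc.IH by (simp add: zero_less_divide_iff)
      then have yn: "y - n > 0" using xy xn by (simp add: mult_less_0_iff)
      have "real n * real n < (- x) * y"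
        using xn yn False by (intro mult_strict_mono) auto
      moreover have "real n + 1 \<le> real n * real n"
      proof -
        have "3 * n \<le> n * n" using False by (intro mult_right_mono) auto
        then have "n + 1 \<le> n * n" using False by linarith
        then have "real (n + 1) \<le> real (n * n)" by (rule of_nat_mono)
        then show ?thesis by simp
      qed
      ultimately show ?thesis using assms(3) by simp
    qed
  qed
  have "t + real (nat (ceiling (- t))) \<ge> 0" by linarith
  then show False using all by (metis not_less)
qed




definition PP :: "complex \<Rightarrow> complex \<Rightarrow> nat list \<Rightarrow> complex" where
  "PP z z' la = (\<Prod>(i, j)\<in>boxes la. (z + of_int (int j - int i)) * (z' + of_int (int j - int i)))"

definition QQ :: "complex \<Rightarrow> complex \<Rightarrow> nat list \<Rightarrow> complex" where
  "QQ z z' la = PP z z' la / pochhammer (z * z') (size_yd la)"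

lemma M_eq: "M_zz z z' la = QQ z z' la * complex_of_real (real (dim_yd la) ^ 2 / real (fact (size_yd la)))"
  unfolding M_zz_def QQ_def PP_def by simp

lemma M_posr_iff: "posr (M_zz z z' la) \<longleftrightarrow> posr (QQ z z' la)"
proof -
  have "real (dim_yd la) ^ 2 / real (fact (size_yd la)) > 0" using dim_pos[of la] by simp
  then show ?thesis unfolding M_eq by (rule posr_scale)
qed

lemma boxes_row_Suc: "boxes [Suc n] = insert (1, Suc n) (boxes [n])"
  unfolding boxes_def by auto

lemma boxes_col_Suc: "boxes (replicate (Suc n) 1) = insert (Suc n, 1) (boxes (replicate n 1))"
  unfolding boxes_def by (auto simp: nth_append replicate_append_same[symmetric] simp del: replicate_Suc replicate_append_same)

lemma QQ_row_Suc: "QQ z z' [Suc n] = QQ z z' [n] * ((z + of_nat n) * (z' + of_nat n) / (z * z' + of_nat n))"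
proof -
  have "(1, Suc n) \<notin> boxes [n]" unfolding boxes_def by auto
  then have "PP z z' [Suc n] = (z + of_nat n) * (z' + of_nat n) * PP z z' [n]"
    unfolding PP_def boxes_row_Suc using boxes_finite[of "[n]"] by simp
  then show ?thesis unfolding QQ_def by (simp add: size_yd_def pochhammer_Suc)
qed

lemma QQ_col_Suc: "QQ z z' (replicate (Suc n) 1) = QQ z z' (replicate n 1) * ((z - of_nat n) * (z' - of_nat n) / (z * z' + of_nat n))"
proof -
  have "(Suc n, 1) \<notin> boxes (replicate n 1)" unfolding boxes_def by auto
  then have "PP z z' (replicate (Suc n) 1) = (z - of_nat n) * (z' - of_nat n) * PP z z' (replicate n 1)"
    unfolding PP_def boxes_col_Suc using boxes_finite[of "replicate n 1"] by simp
  then show ?thesis unfolding QQ_def by (simp add: size_yd_def pochhammer_Suc sum_list_replicate)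
qed

lemma QQ_row0: "QQ z z' [0] = 1"
proof -
  have "boxes [0] = {}" unfolding boxes_def by auto
  then show ?thesis unfolding QQ_def PP_def size_yd_def by simp
qed
lemma QQ_col0: "QQ z z' (replicate 0 1) = 1"
  unfolding QQ_def PP_def size_yd_def by (simp add: boxes_Nil)

lemma boxes21: "boxes [2, 1] = {(1,1), (1,2), (2,1)}"
  unfolding boxes_def by (auto simp: nth_Cons split: nat.splits)
lemma boxes22: "boxes [2, 2] = {(1,1), (1,2), (2,1), (2,2)}"
  unfolding boxes_def by (auto simp: nth_Cons split: nat.splits)

lemma QQ_22: "z * z' + 3 \<noteq> 0 \<Longrightarrow> QQ z z' [2, 2] = QQ z z' [2, 1] * (z * z' / (z * z' + 3))"
proof -
  assume h: "z * z' + 3 \<noteq> 0"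
  have p1: "PP z z' [2, 1] = z * z' * ((z + 1) * (z' + 1)) * ((z - 1) * (z' - 1))"
    unfolding PP_def boxes21 by simp
  have p2: "PP z z' [2, 2] = z * z' * ((z + 1) * (z' + 1)) * ((z - 1) * (z' - 1)) * (z * z')"
    unfolding PP_def boxes22 by simp
  have s: "size_yd [2, 1] = 3" "size_yd [2, 2] = Suc 3" by (simp_all add: size_yd_def)
  show ?thesis unfolding QQ_def p1 p2 s pochhammer_Suc[of _ 3] using h by (simp add: field_simps)
qed

lemma yd_row: "young_diagram [Suc n]" unfolding young_diagram_def by simp
lemma yd_col: "young_diagram (replicate n 1)" unfolding young_diagram_def
  by (induction n) auto
lemma yd21: "young_diagram [2, 1]" unfolding young_diagram_def by simp
lemma yd22: "young_diagram [2, 2]" unfolding young_diagram_def by simp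




theorem proposition2p2:
  fixes z z' :: complex
  assumes "z \<notin> \<int>" and "z' \<notin> \<int>"
    and "\<forall>n::nat. z * z' \<noteq> - of_nat n"
  shows "(\<forall>la. young_diagram la \<longrightarrow> M_zz z z' la \<noteq> 0)
    \<and> ((\<forall>la. young_diagram la \<longrightarrow> M_zz z z' la \<in> \<real> \<and> Re (M_zz z z' la) > 0)
        \<longleftrightarrow> (z' = cnj z
             \<or> (z \<in> \<real> \<and> z' \<in> \<real> \<and> (\<exists>m::int. of_int m < Re z \<and> Re z < of_int m + 1
                                      \<and> of_int m < Re z' \<and> Re z' < of_int m + 1))))"
proof -
  define t where "t = z * z'"
  have tnz: "t + of_nat n \<noteq> 0" for n :: nat
  proof
    assume "t + of_nat n = 0"
    then have "z * z' = - of_nat n" unfolding t_def by (simp add: eq_neg_iff_add_eq_0)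
    then show False using assms(3) by blast
  qed
  have zk: "w + of_int k \<noteq> 0" if "w \<notin> \<int>" for w :: complex and k :: int
  proof
    assume "w + of_int k = 0"
    then have "w = of_int (- k)" by (simp add: eq_neg_iff_add_eq_0)
    then show False using that by auto
  qed
  have part1: "M_zz z z' la \<noteq> 0" for la
  proof -
    have nz: "(z + of_int (int j - int i)) * (z' + of_int (int j - int i)) \<noteq> 0" for i j
      using zk[OF assms(1), of "int j - int i"] zk[OF assms(2), of "int j - int i"] by simp
    have "PP z z' la \<noteq> 0"
      unfolding PP_def using nz by (subst prod_zero_iff[OF boxes_finite]) auto
    moreover have "pochhammer (z * z') (size_yd la) \<noteq> 0"
      using assms(3) by (subst pochhammer_eq_0_iff) auto
    moreover have "real (dim_yd la) ^ 2 / real (fact (size_yd la)) \<noteq> 0" using dim_pos[of la] by simp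
    ultimately show ?thesis unfolding M_eq QQ_def by simp
  qed
  have posM: "(M_zz z z' la \<in> \<real> \<and> Re (M_zz z z' la) > 0) \<longleftrightarrow> posr (QQ z z' la)" for la
    using M_posr_iff[of z z' la] unfolding posr_def by simp
  have iff: "(\<forall>la. young_diagram la \<longrightarrow> posr (QQ z z' la))
        \<longleftrightarrow> (z' = cnj z
             \<or> (z \<in> \<real> \<and> z' \<in> \<real> \<and> (\<exists>m::int. of_int m < Re z \<and> Re z < of_int m + 1
                                      \<and> of_int m < Re z' \<and> Re z' < of_int m + 1)))"
  proof
    assume H: "\<forall>la. young_diagram la \<longrightarrow> posr (QQ z z' la)"
    have rows: "posr (QQ z z' [n])" for n
    proof (cases n)
      case 0 then show ?thesis using QQ_row0 by (simp add: posr_def)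
    next
      case (Suc m) then show ?thesis using H yd_row by blast
    qed
    have cols: "posr (QQ z z' (replicate n 1))" for n using H yd_col by blast
    have a: "posr ((z + of_nat n) * (z' + of_nat n) / (t + of_nat n))" for n :: nat
      using posr_cancel[OF rows[of n]] rows[of "Suc n"] unfolding QQ_row_Suc t_def by blast
    have b: "posr ((z - of_nat n) * (z' - of_nat n) / (t + of_nat n))" for n :: nat
      using posr_cancel[OF cols[of n]] cols[of "Suc n"] unfolding QQ_col_Suc t_def by blast
    have c3: "posr (t / (t + 3))"
    proof -
      have "t + 3 \<noteq> 0" using tnz[of 3] by simp
      then have "QQ z z' [2, 2] = QQ z z' [2, 1] * (t / (t + 3))" using QQ_22[of z z'] unfolding t_def by simp
      then show ?thesis
        using posr_cancel[OF H[rule_format, OF yd21]] H[rule_format, OF yd22] by simp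
    qed
    have treal: "t \<in> \<real>" unfolding t_def
      by (rule t_real) (use a[of 2] b[of 2] tnz[of 2] in \<open>simp_all add: t_def\<close>)
    have sreal: "z + z' \<in> \<real>"
      by (rule s_real) (use a[of 1] tnz[of 1] treal in \<open>simp_all add: t_def\<close>)
    have "(z \<in> \<real> \<and> z' \<in> \<real>) \<or> z' = cnj z"
      using real_or_conj[OF sreal] treal unfolding t_def by blast
    then show "z' = cnj z
             \<or> (z \<in> \<real> \<and> z' \<in> \<real> \<and> (\<exists>m::int. of_int m < Re z \<and> Re z < of_int m + 1
                                      \<and> of_int m < Re z' \<and> Re z' < of_int m + 1))"
    proof
      assume "z \<in> \<real> \<and> z' \<in> \<real>"
      then obtain x y where xy: "z = complex_of_real x" "z' = complex_of_real y"
        by (auto elim!: Reals_cases)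
      have A: "(x + n) * (y + n) / (x * y + n) > 0" for n :: nat
      proof -
        have "(z + of_nat n) * (z' + of_nat n) / (t + of_nat n) = complex_of_real ((x + n) * (y + n) / (x * y + n))"
          unfolding t_def xy by simp
        then have "posr (complex_of_real ((x + n) * (y + n) / (x * y + n)))" using a[of n] by (simp only:)
        then show ?thesis by (simp only: posr_of_real)
      qed
      have B: "(x - n) * (y - n) / (x * y + n) > 0" for n :: nat
      proof -
        have "(z - of_nat n) * (z' - of_nat n) / (t + of_nat n) = complex_of_real ((x - n) * (y - n) / (x * y + n))"
          unfolding t_def xy by simp
        then have "posr (complex_of_real ((x - n) * (y - n) / (x * y + n)))" using b[of n] by (simp only:)
        then show ?thesis by (simp only: posr_of_real)
      qed
      have C: "(x * y) / (x * y + 3) > 0"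
      proof -
        have "t / (t + 3) = complex_of_real ((x * y) / (x * y + 3))"
          unfolding t_def xy by simp
        then have "posr (complex_of_real ((x * y) / (x * y + 3)))" using c3 by (simp only:)
        then show ?thesis by (simp only: posr_of_real)
      qed
      have t0: "x * y \<noteq> 0" using tnz[of 0] unfolding t_def xy by simp
      have nx: "x \<noteq> of_int k" for k using assms(1) xy by auto
      have ny: "y \<noteq> of_int k" for k using assms(2) xy by auto
      have ex: "\<exists>m::int. of_int m < x \<and> x < of_int m + 1 \<and> of_int m < y \<and> y < of_int m + 1"
      proof (cases "floor x = floor y")
        case True
        have "of_int (floor x) < x" using nx[of "floor x"] of_int_floor_le[of x] by linarith
        moreover have "of_int (floor y) < y" using ny[of "floor y"] of_int_floor_le[of y] by linarith
        ultimately show ?thesis using True by (intro exI[of _ "floor x"]) linarith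
      next
        case False
        show ?thesis
        proof (cases "floor x < floor y")
          case True
          have "x < of_int (floor y)" using True by linarith
          moreover have "of_int (floor y) < y" using ny[of "floor y"] of_int_floor_le[of y] by linarith
          ultimately have False
            using real_contra[of x "floor y" y "x * y"] A B C t0 by blast
          then show ?thesis ..
        next
          case F2: False
          then have "floor y < floor x" using False by simp
          then have "y < of_int (floor x)" by linarith
          moreover have "of_int (floor x) < x" using nx[of "floor x"] of_int_floor_le[of x] by linarith
          moreover have "\<And>n::nat. (y + n) * (x + n) / (y * x + n) > 0" using A by (simp add: mult.commute)
          moreover have "\<And>n::nat. (y - n) * (x - n) / (y * x + n) > 0" using B by (simp add: mult.commute)
          moreover have "(y * x) / (y * x + 3) > 0" using C by (simp add: mult.commute)
          ultimately have False
            using real_contra[of y "floor x" x "y * x"] t0 by (simp add: mult.commute)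
          then show ?thesis ..
        qed
      qed
      then show ?thesis using xy by auto
    qed simp
  next
    assume cond: "z' = cnj z
             \<or> (z \<in> \<real> \<and> z' \<in> \<real> \<and> (\<exists>m::int. of_int m < Re z \<and> Re z < of_int m + 1
                                      \<and> of_int m < Re z' \<and> Re z' < of_int m + 1))"
    have fac: "posr ((z + of_int k) * (z' + of_int k))" for k :: int
      using cond
    proof
      assume c: "z' = cnj z"
      have "(z + of_int k) * (z' + of_int k) = (z + of_int k) * cnj (z + of_int k)" using c by simp
      also have "\<dots> = complex_of_real ((cmod (z + of_int k))\<^sup>2)" by (rule complex_norm_square[symmetric])
      finally have e: "(z + of_int k) * (z' + of_int k) = complex_of_real ((cmod (z + of_int k))\<^sup>2)" .
      have "(cmod (z + of_int k))\<^sup>2 > 0" using zk[OF assms(1), of k] by simp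
      then have "posr (complex_of_real ((cmod (z + of_int k))\<^sup>2))" by (simp only: posr_of_real)
      then show ?thesis using e by (simp only:)
    next
      assume "z \<in> \<real> \<and> z' \<in> \<real> \<and> (\<exists>m::int. of_int m < Re z \<and> Re z < of_int m + 1
                                      \<and> of_int m < Re z' \<and> Re z' < of_int m + 1)"
      then obtain x y m where xy: "z = complex_of_real x" "z' = complex_of_real y"
        and m: "of_int m < x" "x < of_int m + 1" "of_int m < y" "y < of_int m + 1"
        by (auto elim!: Reals_cases)
      have "(x + of_int k) * (y + of_int k) > 0"
      proof (cases "m + k \<ge> 0")
        case True
        then have "x + of_int k > 0" "y + of_int k > 0" using m by linarith+
        then show ?thesis by simp
      next
        case False
        then have "x + of_int k < 0" "y + of_int k < 0" using m by linarith+
        then show ?thesis by (simp add: mult_neg_neg)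
      qed
      moreover have "(z + of_int k) * (z' + of_int k) = complex_of_real ((x + of_int k) * (y + of_int k))"
        unfolding xy by simp
      ultimately show ?thesis by (simp only: posr_of_real)
    qed
    have tpos: "posr t" using fac[of 0] unfolding t_def by simp
    then obtain r where r: "r > 0" "t = complex_of_real r" unfolding posr_iff by blast
    show "\<forall>la. young_diagram la \<longrightarrow> posr (QQ z z' la)"
    proof (intro allI impI)
      fix la
      have "posr (PP z z' la)" unfolding PP_def
      proof (rule posr_prod)
        fix x assume "x \<in> boxes la"
        obtain i j where x: "x = (i, j)" by (cases x)
        show "posr (case x of (i, j) \<Rightarrow> (z + of_int (int j - int i)) * (z' + of_int (int j - int i)))"
          unfolding x using fac[of "int j - int i"] by simp
      qed
      moreover have "posr (pochhammer (z * z') (size_yd la))"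
        unfolding pochhammer_prod t_def[symmetric]
      proof (rule posr_prod)
        fix i :: nat
        have "t + of_nat i = complex_of_real (r + real i)" using r by simp
        moreover have "posr (complex_of_real (r + real i))" using r by (simp only: posr_of_real)
        ultimately show "posr (t + of_nat i)" by (simp only:)
      qed
      ultimately show "posr (QQ z z' la)" unfolding QQ_def by (rule posr_divide)
    qed
  qed
  show ?thesis using part1 iff posM by simp
qed


end
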